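(* Let $(X,d)$ be a compact metric space and $f:X\to X$ a cw-expansive homeomorphism with cw-expansivity constant $\alpha>0$. For $\varepsilon>0$ let $N_\varepsilon>0$ be an integer such that $\max_{|n|\le N_\varepsilon}\operatorname{diam} f^n(C)>\alpha$ for every continuum $C\subset X$ with $\operatorname{diam}C\ge\varepsilon$ (such $N_\varepsilon$ exists). Then for every $x\in X$, every $0<\varepsilon<\alpha/2$ and every integer $n\ge N_\varepsilon$: (1) $f^n\big(CW^s_{\alpha/2}(x)\big)\subset CW^s_\varepsilon(f^n(x))$; (2) $CW^s_\varepsilon(x)\subset W^s(x)$; (3) $CW^s_\varepsilon(x)$ equals the connected component of $W^s_{\alpha/2}(x)\cap W^s_{\varepsilon,n}(x)$ containing $x$.
   Context: A homeomorphism $f:X\to X$ of a compact metric space is continuum-wise expansive (cw-expansive) with cw-expansivity constant $\alpha>0$ if $\sup_{n\in\mathbb Z}\operatorname{diam} f^n(C)>\alpha$ for every continuum $C\subset X$ containing more than one point. For $\varepsilon>0$ and $x\in X$: $W^s_\varepsilon(x)=\{y\in X:\ d(f^k(x),f^k(y))\le\varepsilon \text{ for all } k\ge 0\}$; $CW^s_\varepsilon(x)$ is the connected component of $W^s_\varepsilon(x)$ containing $x$; $W^s(x)=\{y\in X:\ d(f^k(x),f^k(y))\to 0 \text{ as } k\to\infty\}$; for an integer $n\ge0$, $W^s_{\varepsilon,n}(x)=\{y\in X:\ d(f^r(x),f^r(y))\le\varepsilon \text{ for } r=0,\dots,n\}$. *)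

theory Defs
  imports "HOL-Analysis.Analysis"
begin

definition ipow :: "'a set \<Rightarrow> ('a \<Rightarrow> 'a) \<Rightarrow> int \<Rightarrow> 'a \<Rightarrow> 'a" where
  "ipow X f n = (if n \<ge> 0 then f ^^ nat n else inv_into X f ^^ nat (- n))"

definition continuum :: "'a::metric_space set \<Rightarrow> bool" where
  "continuum C \<longleftrightarrow> compact C \<and> connected C \<and> C \<noteq> {}"

definition cw_expansive :: "'a::metric_space set \<Rightarrow> ('a \<Rightarrow> 'a) \<Rightarrow> real \<Rightarrow> bool" where
  "cw_expansive X f \<alpha> \<longleftrightarrow> \<alpha> > 0 \<and>
     (\<forall>C. C \<subseteq> X \<and> continuum C \<and> (\<exists>a\<in>C. \<exists>b\<in>C. a \<noteq> b) \<longrightarrow>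
        (\<exists>n::int. diameter (ipow X f n ` C) > \<alpha>))"

definition Ws_loc :: "'a::metric_space set \<Rightarrow> ('a \<Rightarrow> 'a) \<Rightarrow> real \<Rightarrow> 'a \<Rightarrow> 'a set" where
  "Ws_loc X f \<epsilon> x = {y \<in> X. \<forall>k::nat. dist ((f ^^ k) x) ((f ^^ k) y) \<le> \<epsilon>}"

definition CWs_loc :: "'a::metric_space set \<Rightarrow> ('a \<Rightarrow> 'a) \<Rightarrow> real \<Rightarrow> 'a \<Rightarrow> 'a set" where
  "CWs_loc X f \<epsilon> x = connected_component_set (Ws_loc X f \<epsilon> x) x"

definition Ws :: "'a::metric_space set \<Rightarrow> ('a \<Rightarrow> 'a) \<Rightarrow> 'a \<Rightarrow> 'a set" where
  "Ws X f x = {y \<in> X. (\<lambda>k. dist ((f ^^ k) x) ((f ^^ k) y)) \<longlonglongrightarrow> 0}"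

definition Ws_fin :: "'a::metric_space set \<Rightarrow> ('a \<Rightarrow> 'a) \<Rightarrow> real \<Rightarrow> nat \<Rightarrow> 'a \<Rightarrow> 'a set" where
  "Ws_fin X f \<epsilon> n x = {y \<in> X. \<forall>r\<le>n. dist ((f ^^ r) x) ((f ^^ r) y) \<le> \<epsilon>}"

end

theory Submission
  imports Defs
begin


lemma diameter_le_metric:
  fixes S :: "'a::metric_space set"
  assumes "0 \<le> d" "\<And>u v. u \<in> S \<Longrightarrow> v \<in> S \<Longrightarrow> dist u v \<le> d"
  shows "diameter S \<le> d"
  using assms by (auto simp: diameter_def intro!: cSUP_least)

lemma cluster_exists:
  fixes X :: "'a::metric_space set" and g :: "nat \<Rightarrow> 'a"
  assumes "compact X" "\<And>j. g j \<in> X"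
  shows "\<exists>z\<in>X. \<forall>e>0. \<forall>M. \<exists>j\<ge>M. dist (g j) z < e"
proof -
  obtain z r where z: "z \<in> X" "strict_mono r" "(g \<circ> r) \<longlonglongrightarrow> z"
    using seq_compactE[OF compact_imp_seq_compact[OF assms(1)]] assms(2) by metis
  have "\<forall>e>0. \<forall>M. \<exists>j\<ge>M. dist (g j) z < e"
  proof (intro allI impI)
    fix e :: real and M assume "e > 0"
    then obtain N where N: "\<forall>n\<ge>N. dist ((g \<circ> r) n) z < e"
      using z(3) unfolding lim_sequentially by blast
    have "r (max M N) \<ge> M" using seq_suble[OF z(2), of "max M N"] by linarith
    moreover have "dist (g (r (max M N))) z < e" using N by auto
    ultimately show "\<exists>j\<ge>M. dist (g j) z < e" by blast
  qed
  with z show ?thesis by blast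
qed

lemma limsup_connected:
  fixes X :: "'a::metric_space set" and S :: "nat \<Rightarrow> 'a set"
  assumes X: "compact X" and SX: "\<And>i. S i \<subseteq> X" and Sc: "\<And>i. connected (S i)"
    and aS: "\<And>i. a i \<in> S i" and alim: "a \<longlonglongrightarrow> p"
    and K: "K = {z. \<forall>e>0. \<forall>M. \<exists>i\<ge>M. \<exists>s\<in>S i. dist s z < e}"
  shows "closed K" "K \<subseteq> X" "p \<in> K" "connected K"
proof -
  show clK: "closed K"
  proof -
    have "closure K \<subseteq> K"
    proof
      fix z assume "z \<in> closure K"
      hence za: "\<forall>e>0. \<exists>y\<in>K. dist y z < e" by (simp add: closure_approachable)
      show "z \<in> K" unfolding K
      proof (intro CollectI allI impI)
        fix e :: real and M assume "e > 0"
        have e2: "e/2 > 0" using \<open>e > 0\<close> by simp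
        then obtain y where "y \<in> K" "dist y z < e/2" using za by blast
        hence "\<forall>e>0. \<forall>M. \<exists>i\<ge>M. \<exists>s\<in>S i. dist s y < e" unfolding K by simp
        then obtain i s where "i \<ge> M" "s \<in> S i" "dist s y < e/2" using e2 by blast
        moreover have "dist s z < e" using calculation \<open>dist y z < e/2\<close> dist_triangle[of s z y] by linarith
        ultimately show "\<exists>i\<ge>M. \<exists>s\<in>S i. dist s z < e" by blast
      qed
    qed
    thus ?thesis by (simp add: closure_subset_eq)
  qed
  show KX: "K \<subseteq> X"
  proof
    fix z assume "z \<in> K"
    have "\<forall>e>0. \<exists>y\<in>X. dist y z < e"
    proof (intro allI impI)
      fix e :: real assume "e > 0"
      have "\<forall>e>0. \<forall>M. \<exists>i\<ge>M. \<exists>s\<in>S i. dist s z < e" using \<open>z \<in> K\<close> unfolding K by simp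
      then obtain i s where "s \<in> S i" "dist s z < e" using \<open>e > 0\<close> by blast
      moreover have "s \<in> X" using SX calculation(1) by auto
      ultimately show "\<exists>y\<in>X. dist y z < e" by blast
    qed
    hence "z \<in> closure X" by (simp add: closure_approachable)
    thus "z \<in> X" using compact_imp_closed[OF X] by (simp add: closure_closed)
  qed
  show pK: "p \<in> K" unfolding K
  proof (intro CollectI allI impI)
    fix e :: real and M assume "e > 0"
    then obtain N where N: "\<forall>n\<ge>N. dist (a n) p < e" using alim unfolding lim_sequentially by blast
    thus "\<exists>i\<ge>M. \<exists>s\<in>S i. dist s p < e" using aS[of "max M N"] by (metis max.cobounded1 max.cobounded2)
  qed
  have main: False if AB: "closed A" "closed B" "A \<noteq> {}" "B \<noteq> {}" "A \<union> B = K" "A \<inter> B = {}" "p \<in> A" for A B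
  proof -
    define U where "U = {z. infdist z A < infdist z B}"
    define V where "V = {z. infdist z B < infdist z A}"
    have oU: "open U" unfolding U_def by (intro open_Collect_less continuous_intros)
    have oV: "open V" unfolding V_def by (intro open_Collect_less continuous_intros)
    have UV: "U \<inter> V = {}" unfolding U_def V_def by auto
    have AU: "A \<subseteq> U"
    proof
      fix z assume "z \<in> A"
      hence "z \<notin> B" using AB(6) by blast
      hence "infdist z B > 0" using infdist_pos_not_in_closed[OF AB(2) AB(4)] by simp
      thus "z \<in> U" using \<open>z \<in> A\<close> by (simp add: U_def)
    qed
    have BV: "B \<subseteq> V"
    proof
      fix z assume "z \<in> B"
      hence "z \<notin> A" using AB(6) by blast
      hence "infdist z A > 0" using infdist_pos_not_in_closed[OF AB(1) AB(3)] by simp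
      thus "z \<in> V" using \<open>z \<in> B\<close> by (simp add: V_def)
    qed
    obtain N1 where N1: "\<forall>n\<ge>N1. a n \<in> U"
      using alim oU AU AB(7) unfolding tendsto_def eventually_sequentially by blast
    obtain b where "b \<in> B" using AB by blast
    then obtain \<rho> where "\<rho> > 0" "ball b \<rho> \<subseteq> V" using oV BV open_contains_ball by blast
    have bK: "b \<in> K" using \<open>b \<in> B\<close> AB by blast
    have freq: "\<exists>i\<ge>M. \<exists>t\<in>S i. t \<notin> U \<union> V" for M
    proof -
      obtain i s where i: "i \<ge> max M N1" "s \<in> S i" "dist s b < \<rho>"
        using bK \<open>\<rho> > 0\<close> unfolding K by blast
      have "s \<in> V" using i \<open>ball b \<rho> \<subseteq> V\<close> by (auto simp: dist_commute)
      have "a i \<in> U" using N1 i by auto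
      have "\<not> S i \<subseteq> U \<union> V"
      proof
        assume sub: "S i \<subseteq> U \<union> V"
        have "U \<inter> V \<inter> S i = {}" using UV by blast
        from connectedD[OF Sc[of i] oU oV this sub] have "U \<inter> S i = {} \<or> V \<inter> S i = {}" .
        thus False using aS[of i] \<open>a i \<in> U\<close> \<open>s \<in> V\<close> i(2) by blast
      qed
      thus ?thesis using i by auto
    qed
    define h where "h M = (SOME i. i \<ge> M \<and> (\<exists>t\<in>S i. t \<notin> U \<union> V))" for M
    have h: "h M \<ge> M \<and> (\<exists>t\<in>S (h M). t \<notin> U \<union> V)" for M
      unfolding h_def using someI_ex[OF freq[of M]] .
    define g where "g M = (SOME t. t \<in> S (h M) \<and> t \<notin> U \<union> V)" for M
    have g: "g M \<in> S (h M) \<and> g M \<notin> U \<union> V" for M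
      unfolding g_def using someI_ex[of "\<lambda>t. t \<in> S (h M) \<and> t \<notin> U \<union> V"] h[of M] by blast
    have cpt: "compact (X - (U \<union> V))"
    proof -
      have "closed (- (U \<union> V))" using oU oV by (intro closed_Compl open_Un)
      hence "compact (X \<inter> - (U \<union> V))" using compact_Int_closed[OF X] by blast
      moreover have "X - (U \<union> V) = X \<inter> - (U \<union> V)" by blast
      ultimately show ?thesis by simp
    qed
    obtain z where z: "z \<in> X - (U \<union> V)" "\<forall>e>0. \<forall>M. \<exists>j\<ge>M. dist (g j) z < e"
      using cluster_exists[OF cpt, of g] g SX by blast
    have "z \<in> K" unfolding K
    proof (intro CollectI allI impI)
      fix e :: real and M assume "e > 0"
      then obtain j where "j \<ge> M" "dist (g j) z < e" using z(2) by blast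
      thus "\<exists>i\<ge>M. \<exists>s\<in>S i. dist s z < e" 
      proof -
        have "h j \<ge> M" using h[of j] \<open>j \<ge> M\<close> by linarith
        moreover have "g j \<in> S (h j)" using g[of j] by blast
        ultimately show ?thesis using \<open>dist (g j) z < e\<close> by blast
      qed
    qed
    thus False using z AB AU BV by blast
  qed
  show "connected K"
    unfolding connected_closed_set[OF clK]
  proof (intro notI, elim exE conjE)
    fix A B assume AB: "closed A" "closed B" "A \<noteq> {}" "B \<noteq> {}" "A \<union> B = K" "A \<inter> B = {}"
    show False
    proof (cases "p \<in> A")
      case True
      thus False using main[OF AB] by blast
    next
      case False
      hence "p \<in> B" using pK AB(5) by blast
      moreover have "B \<union> A = K" "B \<inter> A = {}" using AB by blast+
      ultimately show False using main[OF AB(2) AB(1) AB(4) AB(3)] by blast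
    qed
  qed
qed



lemma iter_in: "f ` X \<subseteq> X \<Longrightarrow> x \<in> X \<Longrightarrow> (f ^^ k) x \<in> X"
  by (induction k) auto

lemma iter_cont:
  assumes "continuous_on X f" "f ` X \<subseteq> X"
  shows "continuous_on X (f ^^ k)"
proof (induction k)
  case 0 thus ?case by (simp add: continuous_on_id)
next
  case (Suc k)
  have "(f ^^ k) ` X \<subseteq> X" using iter_in[OF assms(2)] by blast
  hence "continuous_on ((f ^^ k) ` X) f" using assms(1) continuous_on_subset by blast
  hence "continuous_on X (f \<circ> (f ^^ k))" using continuous_on_compose[OF Suc] by blast
  thus ?case by simp
qed

lemma inv_props:
  fixes X :: "'a::metric_space set"
  assumes "compact X" "continuous_on X f" "bij_betw f X X"
  shows "continuous_on X (inv_into X f)" "inv_into X f ` X \<subseteq> X"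
    "\<And>y. y \<in> X \<Longrightarrow> inv_into X f (f y) = y"
proof -
  have fX: "f ` X = X" using bij_betw_imp_surj_on[OF assms(3)] .
  have inj: "inj_on f X" using bij_betw_imp_inj_on[OF assms(3)] .
  show inv: "\<And>y. y \<in> X \<Longrightarrow> inv_into X f (f y) = y" using inv_into_f_f[OF inj] by blast
  have "continuous_on (f ` X) (inv_into X f)"
    using continuous_on_inv[OF assms(2) assms(1)] inv by blast
  thus "continuous_on X (inv_into X f)" using fX by simp
  show "inv_into X f ` X \<subseteq> X" using inv_into_into[of _ f X] fX by blast
qed

lemma ipow_cont:
  fixes X :: "'a::metric_space set"
  assumes "compact X" "continuous_on X f" "bij_betw f X X"
  shows "continuous_on X (ipow X f m)" "\<And>y. y \<in> X \<Longrightarrow> ipow X f m y \<in> X"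
proof -
  have fXs: "f ` X \<subseteq> X" using bij_betw_imp_surj_on[OF assms(3)] by simp
  note ip = inv_props[OF assms]
  show "continuous_on X (ipow X f m)"
    unfolding ipow_def using iter_cont[OF assms(2) fXs] iter_cont[OF ip(1) ip(2)] by simp
  show "\<And>y. y \<in> X \<Longrightarrow> ipow X f m y \<in> X"
    unfolding ipow_def using iter_in[OF fXs] iter_in[OF ip(2)] by simp
qed

lemma inv_iter:
  fixes X :: "'a::metric_space set"
  assumes "compact X" "continuous_on X f" "bij_betw f X X" "y \<in> X"
  shows "(inv_into X f ^^ j) ((f ^^ (j + l)) y) = (f ^^ l) y"
proof (induction j)
  case 0 thus ?case by simp
next
  case (Suc j)
  have fXs: "f ` X \<subseteq> X" using bij_betw_imp_surj_on[OF assms(3)] by simp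
  have inX: "(f ^^ (j + l)) y \<in> X" using iter_in[OF fXs assms(4)] .
  have "(inv_into X f ^^ Suc j) ((f ^^ (Suc j + l)) y)
      = (inv_into X f ^^ j) (inv_into X f (f ((f ^^ (j + l)) y)))"
  proof -
    have e: "(f ^^ (Suc j + l)) y = f ((f ^^ (j + l)) y)" by simp
    show ?thesis by (simp only: e funpow_Suc_right comp_def)
  qed
  also have "\<dots> = (inv_into X f ^^ j) ((f ^^ (j + l)) y)"
    using inv_props(3)[OF assms(1-3) inX] by simp
  finally show ?case using Suc by simp
qed

lemma ipow_iter:
  fixes X :: "'a::metric_space set"
  assumes "compact X" "continuous_on X f" "bij_betw f X X" "y \<in> X" "int k + m \<ge> 0"
  shows "ipow X f m ((f ^^ k) y) = (f ^^ nat (int k + m)) y"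
proof (cases "m \<ge> 0")
  case True
  hence "nat (int k + m) = nat m + k" by simp
  thus ?thesis using True by (simp add: ipow_def funpow_add)
next
  case False
  define j where "j = nat (- m)"
  define l where "l = nat (int k + m)"
  have "k = j + l" using False assms(5) unfolding j_def l_def by simp
  thus ?thesis using False inv_iter[OF assms(1-4), of j l] unfolding ipow_def j_def l_def by simp
qed

lemma Ws_loc_closed:
  fixes X :: "'a::metric_space set"
  assumes "compact X" "continuous_on X f" "f ` X \<subseteq> X"
  shows "closed (Ws_loc X f r x)"
proof -
  have "Ws_loc X f r x = (\<Inter>k. X \<inter> (f ^^ k) -` cball ((f ^^ k) x) r)"
    unfolding Ws_loc_def by (auto simp: cball_def)
  moreover have "closed (X \<inter> (f ^^ k) -` cball ((f ^^ k) x) r)" for k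
    using continuous_closed_preimage[OF iter_cont[OF assms(2,3)] compact_imp_closed[OF assms(1)]]
    by blast
  moreover have "closed (\<Inter>k. X \<inter> (f ^^ k) -` cball ((f ^^ k) x) r)"
    by (rule closed_INT) (use calculation(2) in blast)
  ultimately show ?thesis by metis
qed



lemma CW_basic:
  fixes X :: "'a::metric_space set"
  assumes "compact X" "continuous_on X f" "bij_betw f X X" "x \<in> X" "0 \<le> r"
  shows "CWs_loc X f r x \<subseteq> X" "compact (CWs_loc X f r x)" "connected (CWs_loc X f r x)"
    "x \<in> CWs_loc X f r x"
    "\<And>c t. c \<in> CWs_loc X f r x \<Longrightarrow> dist ((f ^^ t) x) ((f ^^ t) c) \<le> r"
proof -
  have fXs: "f ` X \<subseteq> X" using bij_betw_imp_surj_on[OF assms(3)] by simp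
  have sub: "CWs_loc X f r x \<subseteq> Ws_loc X f r x"
    unfolding CWs_loc_def by (rule connected_component_subset)
  thus CX: "CWs_loc X f r x \<subseteq> X" unfolding Ws_loc_def by blast
  have "closed (CWs_loc X f r x)"
    unfolding CWs_loc_def by (rule closed_connected_component[OF Ws_loc_closed[OF assms(1,2) fXs]])
  hence "compact (X \<inter> CWs_loc X f r x)" using compact_Int_closed[OF assms(1)] by blast
  moreover have "X \<inter> CWs_loc X f r x = CWs_loc X f r x" using CX by blast
  ultimately show "compact (CWs_loc X f r x)" by simp
  show "connected (CWs_loc X f r x)" unfolding CWs_loc_def by simp
  have "x \<in> Ws_loc X f r x" unfolding Ws_loc_def using assms(4,5) by simp
  thus "x \<in> CWs_loc X f r x" unfolding CWs_loc_def by simp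
  show "\<And>c t. c \<in> CWs_loc X f r x \<Longrightarrow> dist ((f ^^ t) x) ((f ^^ t) c) \<le> r"
    using sub unfolding Ws_loc_def by blast
qed

lemma lemmaA:
  fixes X :: "'a::metric_space set"
  assumes X: "compact X" "continuous_on X f" "bij_betw f X X"
    and apos: "\<alpha> > 0"
    and H: "\<forall>C. C \<subseteq> X \<and> continuum C \<and> diameter C \<ge> \<epsilon> \<longrightarrow>
           (\<exists>m::int. \<bar>m\<bar> \<le> int N \<and> diameter (ipow X f m ` C) > \<alpha>)"
    and "x \<in> X" and "j \<ge> N" and y: "y \<in> CWs_loc X f (\<alpha> / 2) x"
  shows "dist ((f ^^ j) x) ((f ^^ j) y) < \<epsilon>"
proof (rule ccontr)
  assume "\<not> ?thesis"
  hence ge: "\<epsilon> \<le> dist ((f ^^ j) x) ((f ^^ j) y)" by simp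
  define C where "C = CWs_loc X f (\<alpha> / 2) x"
  have a2: "0 \<le> \<alpha> / 2" using apos by simp
  note CB = CW_basic[OF X \<open>x \<in> X\<close> a2, folded C_def]
  have fXs: "f ` X \<subseteq> X" using bij_betw_imp_surj_on[OF X(3)] by simp
  define D where "D = (f ^^ j) ` C"
  have contj: "continuous_on C (f ^^ j)"
    using continuous_on_subset[OF iter_cont[OF X(2) fXs] CB(1)] .
  have cD: "compact D" unfolding D_def using compact_continuous_image[OF contj CB(2)] .
  have coD: "connected D" unfolding D_def using connected_continuous_image[OF contj CB(3)] .
  have xD: "(f ^^ j) x \<in> D" "(f ^^ j) y \<in> D" unfolding D_def using CB(4) y C_def by auto
  have DX: "D \<subseteq> X" unfolding D_def using CB(1) iter_in[OF fXs] by blast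
  have "continuum D" unfolding continuum_def using cD coD xD by blast
  moreover have "diameter D \<ge> \<epsilon>"
    using diameter_bounded_bound[OF compact_imp_bounded[OF cD] xD] ge by linarith
  ultimately obtain m :: int where m: "\<bar>m\<bar> \<le> int N" "diameter (ipow X f m ` D) > \<alpha>"
    using H DX by blast
  have "diameter (ipow X f m ` D) \<le> \<alpha>"
  proof (rule diameter_le_metric)
    show "0 \<le> \<alpha>" using apos by simp
    fix u v assume "u \<in> ipow X f m ` D" "v \<in> ipow X f m ` D"
    then obtain c c' where cc: "c \<in> C" "c' \<in> C" "u = ipow X f m ((f ^^ j) c)" "v = ipow X f m ((f ^^ j) c')"
      unfolding D_def by blast
    have nn: "int j + m \<ge> 0" using m(1) \<open>j \<ge> N\<close> by linarith
    define t where "t = nat (int j + m)"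
    have "u = (f ^^ t) c" "v = (f ^^ t) c'"
      using cc ipow_iter[OF X _ nn] CB(1) unfolding t_def by auto
    moreover have "dist ((f ^^ t) x) ((f ^^ t) c) \<le> \<alpha> / 2" "dist ((f ^^ t) x) ((f ^^ t) c') \<le> \<alpha> / 2"
      using CB(5) cc by auto
    ultimately show "dist u v \<le> \<alpha>"
      using dist_triangle[of u v "(f ^^ t) x"] by (simp add: dist_commute)
  qed
  thus False using m(2) by linarith
qed



lemma partB:
  fixes X :: "'a::metric_space set"
  assumes X: "compact X" "continuous_on X f" "bij_betw f X X"
    and cw: "cw_expansive X f \<alpha>"
    and "0 < \<epsilon>" "\<epsilon> < \<alpha> / 2" and "x \<in> X" and y: "y \<in> CWs_loc X f \<epsilon> x"
  shows "y \<in> Ws X f x"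
proof -
  define C where "C = CWs_loc X f \<epsilon> x"
  have e0: "0 \<le> \<epsilon>" using assms by simp
  note CB = CW_basic[OF X \<open>x \<in> X\<close> e0, folded C_def]
  have fXs: "f ` X \<subseteq> X" using bij_betw_imp_surj_on[OF X(3)] by simp
  have yC: "y \<in> C" using y C_def by simp
  have yX: "y \<in> X" using yC CB(1) by blast
  have "(\<lambda>k. dist ((f ^^ k) x) ((f ^^ k) y)) \<longlonglongrightarrow> 0"
  proof (rule ccontr)
    assume "\<not> ?thesis"
    hence "\<not> (\<forall>r>0. \<exists>no. \<forall>n\<ge>no. dist (dist ((f ^^ n) x) ((f ^^ n) y)) 0 < r)"
      unfolding lim_sequentially .
    then obtain \<delta> where d0: "\<delta> > 0" and fr0: "\<forall>M. \<exists>k\<ge>M. \<not> dist (dist ((f ^^ k) x) ((f ^^ k) y)) 0 < \<delta>"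
      by blast
    have fr: "\<forall>M. \<exists>k\<ge>M. \<delta> \<le> dist ((f ^^ k) x) ((f ^^ k) y)"
      using fr0 by (simp add: dist_real_def not_less)
    define k where "k M = (SOME k. k \<ge> M \<and> \<delta> \<le> dist ((f ^^ k) x) ((f ^^ k) y))" for M
    have k: "k M \<ge> M \<and> \<delta> \<le> dist ((f ^^ k M) x) ((f ^^ k M) y)" for M
      unfolding k_def using someI_ex[OF fr[rule_format, of M]] .
    define q where "q i = ((f ^^ k i) x, (f ^^ k i) y)" for i
    have qX: "\<forall>i. q i \<in> X \<times> X" unfolding q_def using iter_in[OF fXs] \<open>x \<in> X\<close> yX by auto
    have "compact (X \<times> X)" by (rule compact_Times[OF X(1) X(1)])
    then obtain l r where l: "l \<in> X \<times> X" "strict_mono r" "(q \<circ> r) \<longlonglongrightarrow> l"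
      using seq_compactE[OF compact_imp_seq_compact] qX by metis
    obtain a b where ab: "l = (a, b)" by (cases l)
    define k' where "k' i = k (r i)" for i
    have k'ge: "k' i \<ge> i" for i unfolding k'_def using k[of "r i"] seq_suble[OF l(2), of i] by linarith
    have alim: "(\<lambda>i. (f ^^ k' i) x) \<longlonglongrightarrow> a"
      using tendsto_fst[OF l(3)] unfolding ab q_def k'_def by (simp add: comp_def)
    have blim: "(\<lambda>i. (f ^^ k' i) y) \<longlonglongrightarrow> b"
      using tendsto_snd[OF l(3)] unfolding ab q_def k'_def by (simp add: comp_def)
    have "\<delta> \<le> dist a b"
    proof (rule LIMSEQ_le_const[OF tendsto_dist[OF alim blim]])
      show "\<exists>N. \<forall>n\<ge>N. \<delta> \<le> dist ((f ^^ k' n) x) ((f ^^ k' n) y)"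
        unfolding k'_def using k by blast
    qed
    hence "a \<noteq> b" using d0 by auto
    define S where "S i = (f ^^ k' i) ` C" for i
    define K where "K = {z. \<forall>e>0. \<forall>M. \<exists>i\<ge>M. \<exists>s\<in>S i. dist s z < e}"
    have SX: "S i \<subseteq> X" for i unfolding S_def using CB(1) iter_in[OF fXs] by blast
    have Sc: "connected (S i)" for i
      unfolding S_def
      using connected_continuous_image[OF continuous_on_subset[OF iter_cont[OF X(2) fXs] CB(1)] CB(3)] .
    have aS: "(f ^^ k' i) x \<in> S i" for i unfolding S_def using CB(4) by blast
    note LC = limsup_connected[OF X(1) SX Sc aS alim K_def]
    have bK: "b \<in> K" unfolding K_def
    proof (intro CollectI allI impI)
      fix e :: real and M assume "e > 0"
      then obtain N where N: "\<forall>n\<ge>N. dist ((f ^^ k' n) y) b < e" using blim unfolding lim_sequentially by blast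
      have "(f ^^ k' (max M N)) y \<in> S (max M N)" unfolding S_def using yC by blast
      moreover have "dist ((f ^^ k' (max M N)) y) b < e" using N by simp
      ultimately show "\<exists>i\<ge>M. \<exists>s\<in>S i. dist s b < e" by (meson max.cobounded1)
    qed
    have "compact (X \<inter> K)" using compact_Int_closed[OF X(1) LC(1)] .
    moreover have "X \<inter> K = K" using LC(2) by blast
    ultimately have cK: "compact K" by simp
    have "continuum K" unfolding continuum_def using cK LC(4) LC(3) by blast
    then obtain m :: int where m: "diameter (ipow X f m ` K) > \<alpha>"
    proof -
      have pre: "K \<subseteq> X \<and> continuum K \<and> (\<exists>a\<in>K. \<exists>b\<in>K. a \<noteq> b)"
        using LC(2) LC(3) bK \<open>a \<noteq> b\<close> \<open>continuum K\<close> by blast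
      have "\<forall>C. C \<subseteq> X \<and> continuum C \<and> (\<exists>a\<in>C. \<exists>b\<in>C. a \<noteq> b) \<longrightarrow>
        (\<exists>n::int. diameter (ipow X f n ` C) > \<alpha>)" using cw unfolding cw_expansive_def by simp
      hence "\<exists>n::int. diameter (ipow X f n ` K) > \<alpha>" using pre by blast
      thus ?thesis using that by blast
    qed
    define g where "g = ipow X f m"
    have gc: "continuous_on X g" unfolding g_def using ipow_cont(1)[OF X] .
    have aX: "a \<in> X" using LC(2,3) by blast
    have claim: "dist (g z) (g a) \<le> \<epsilon>" if zK: "z \<in> K" for z
    proof (rule ccontr)
      assume neg: "\<not> ?thesis"
      define \<eta> where "\<eta> = (dist (g z) (g a) - \<epsilon>) / 3"
      have eta: "\<eta> > 0" using neg unfolding \<eta>_def by simp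
      have zX: "z \<in> X" using zK LC(2) by blast
      obtain \<rho> where rho: "\<rho> > 0" "\<forall>u\<in>X. dist u z < \<rho> \<longrightarrow> dist (g u) (g z) < \<eta>"
        using gc zX eta unfolding continuous_on_iff by blast
      obtain \<rho>2 where rho2: "\<rho>2 > 0" "\<forall>u\<in>X. dist u a < \<rho>2 \<longrightarrow> dist (g u) (g a) < \<eta>"
        using gc aX eta unfolding continuous_on_iff by blast
      obtain N1 where N1: "\<forall>n\<ge>N1. dist ((f ^^ k' n) x) a < \<rho>2"
        using alim rho2(1) unfolding lim_sequentially by blast
      have "\<forall>e>0. \<forall>M. \<exists>i\<ge>M. \<exists>s\<in>S i. dist s z < e" using zK unfolding K_def by simp
      then obtain i s where i: "i \<ge> max N1 (nat \<bar>m\<bar>)" "s \<in> S i" "dist s z < \<rho>"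
        using rho(1) by blast
      then obtain c where c: "c \<in> C" "s = (f ^^ k' i) c" unfolding S_def by blast
      have cX: "c \<in> X" using c CB(1) by blast
      have nn: "int (k' i) + m \<ge> 0" using i(1) k'ge[of i] by linarith
      define t where "t = nat (int (k' i) + m)"
      have gs: "g s = (f ^^ t) c" unfolding g_def t_def c(2) using ipow_iter[OF X cX nn] .
      have gai: "g ((f ^^ k' i) x) = (f ^^ t) x" unfolding g_def t_def using ipow_iter[OF X \<open>x \<in> X\<close> nn] .
      have d1: "dist (g s) (g z) < \<eta>" using rho(2) i(3) SX i(2) by blast
      have d2: "dist (g s) (g ((f ^^ k' i) x)) \<le> \<epsilon>" using gs gai CB(5)[OF c(1)] by (simp add: dist_commute)
      have "(f ^^ k' i) x \<in> X" using iter_in[OF fXs \<open>x \<in> X\<close>] .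
      moreover have "dist ((f ^^ k' i) x) a < \<rho>2" using N1 i(1) by simp
      ultimately have d3: "dist (g ((f ^^ k' i) x)) (g a) < \<eta>" using rho2(2) by blast
      have "dist (g z) (g a) \<le> dist (g s) (g z) + dist (g s) (g ((f ^^ k' i) x)) + dist (g ((f ^^ k' i) x)) (g a)"
      proof -
        have "dist (g z) (g a) \<le> dist (g z) (g s) + dist (g s) (g a)" by (rule dist_triangle)
        moreover have "dist (g s) (g a) \<le> dist (g s) (g ((f ^^ k' i) x)) + dist (g ((f ^^ k' i) x)) (g a)"
          by (rule dist_triangle)
        moreover have "dist (g z) (g s) = dist (g s) (g z)" by (rule dist_commute)
        ultimately show ?thesis by linarith
      qed
      thus False using d1 d2 d3 neg unfolding \<eta>_def by argo
    qed
    have "diameter (g ` K) \<le> 2 * \<epsilon>"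
    proof (rule diameter_le_metric)
      show "0 \<le> 2 * \<epsilon>" using e0 by simp
      fix u v assume "u \<in> g ` K" "v \<in> g ` K"
      then obtain z w where "z \<in> K" "w \<in> K" "u = g z" "v = g w" by blast
      thus "dist u v \<le> 2 * \<epsilon>"
        using claim[of z] claim[of w] dist_triangle[of u v "g a"] by (simp add: dist_commute)
    qed
    thus False using m assms(6) unfolding g_def by linarith
  qed
  thus ?thesis unfolding Ws_def using yX by simp
qed



theorem mainTheorem4:
  fixes X :: "'a::metric_space set" and f :: "'a \<Rightarrow> 'a" and \<alpha> \<epsilon> :: real
    and N n :: nat and x :: 'a
  assumes "compact X"
    and "continuous_on X f" and "bij_betw f X X"
    and "cw_expansive X f \<alpha>"
    and "0 < \<epsilon>" and "\<epsilon> < \<alpha> / 2"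
    and "N > 0"
    and "\<forall>C. C \<subseteq> X \<and> continuum C \<and> diameter C \<ge> \<epsilon> \<longrightarrow>
           (\<exists>m::int. \<bar>m\<bar> \<le> int N \<and> diameter (ipow X f m ` C) > \<alpha>)"
    and "x \<in> X" and "n \<ge> N"
  shows "(f ^^ n) ` CWs_loc X f (\<alpha> / 2) x \<subseteq> CWs_loc X f \<epsilon> ((f ^^ n) x)
       \<and> CWs_loc X f \<epsilon> x \<subseteq> Ws X f x
       \<and> CWs_loc X f \<epsilon> x =
           connected_component_set (Ws_loc X f (\<alpha> / 2) x \<inter> Ws_fin X f \<epsilon> n x) x"
proof -
  note X = assms(1-3)
  have apos: "\<alpha> > 0" using assms(4) unfolding cw_expansive_def by simp
  have a2: "0 \<le> \<alpha> / 2" using apos by simp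
  have fXs: "f ` X \<subseteq> X" using bij_betw_imp_surj_on[OF X(3)] by simp
  define C where "C = CWs_loc X f (\<alpha> / 2) x"
  note CB = CW_basic[OF X \<open>x \<in> X\<close> a2, folded C_def]
  have A: "dist ((f ^^ j) x) ((f ^^ j) y) < \<epsilon>" if "j \<ge> N" "y \<in> C" for j y
    using lemmaA[OF X apos assms(8) assms(9) that(1)] that(2) C_def by blast
  have P1: "(f ^^ n) ` C \<subseteq> CWs_loc X f \<epsilon> ((f ^^ n) x)"
    unfolding CWs_loc_def
  proof (rule connected_component_maximal)
    show "(f ^^ n) x \<in> (f ^^ n) ` C" using CB(4) by blast
    show "connected ((f ^^ n) ` C)"
      using connected_continuous_image[OF continuous_on_subset[OF iter_cont[OF X(2) fXs] CB(1)] CB(3)] .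
    show "(f ^^ n) ` C \<subseteq> Ws_loc X f \<epsilon> ((f ^^ n) x)"
    proof
      fix w assume "w \<in> (f ^^ n) ` C"
      then obtain y where y: "y \<in> C" "w = (f ^^ n) y" by blast
      have "w \<in> X" using y CB(1) iter_in[OF fXs] by blast
      moreover have "dist ((f ^^ k) ((f ^^ n) x)) ((f ^^ k) w) \<le> \<epsilon>" for k
      proof -
        have "dist ((f ^^ (k + n)) x) ((f ^^ (k + n)) y) < \<epsilon>" using A[of "k + n" y] y assms(10) by simp
        thus ?thesis using y by (simp add: funpow_add)
      qed
      ultimately show "w \<in> Ws_loc X f \<epsilon> ((f ^^ n) x)" unfolding Ws_loc_def by blast
    qed
  qed
  have P2: "CWs_loc X f \<epsilon> x \<subseteq> Ws X f x"
    using partB[OF X assms(4) assms(5) assms(6) assms(9)] by blast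
  define T where "T = Ws_loc X f (\<alpha> / 2) x \<inter> Ws_fin X f \<epsilon> n x"
  have P3a: "CWs_loc X f \<epsilon> x \<subseteq> connected_component_set T x"
    unfolding CWs_loc_def
  proof (rule connected_component_mono)
    show "Ws_loc X f \<epsilon> x \<subseteq> T"
    proof
      fix y assume y: "y \<in> Ws_loc X f \<epsilon> x"
      hence "y \<in> X" "\<And>k. dist ((f ^^ k) x) ((f ^^ k) y) \<le> \<epsilon>" unfolding Ws_loc_def by auto
      moreover have "\<And>k. dist ((f ^^ k) x) ((f ^^ k) y) \<le> \<alpha> / 2"
        using calculation(2) assms(6) by (meson less_imp_le order_trans)
      ultimately show "y \<in> T" unfolding T_def Ws_loc_def Ws_fin_def by auto
    qed
  qed
  have P3b: "connected_component_set T x \<subseteq> CWs_loc X f \<epsilon> x"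
  proof -
    define D where "D = connected_component_set T x"
    have xT: "x \<in> T" unfolding T_def Ws_loc_def Ws_fin_def using assms(9) a2 assms(5) by simp
    have DC: "D \<subseteq> C" unfolding C_def CWs_loc_def
    proof (rule connected_component_maximal)
      show "x \<in> D" unfolding D_def using xT by simp
      show "connected D" unfolding D_def by simp
      show "D \<subseteq> Ws_loc X f (\<alpha> / 2) x" unfolding D_def T_def
        using connected_component_subset by blast
    qed
    have "D \<subseteq> connected_component_set (Ws_loc X f \<epsilon> x) x"
    proof (rule connected_component_maximal)
      show "x \<in> D" unfolding D_def using xT by simp
      show "connected D" unfolding D_def by simp
      show "D \<subseteq> Ws_loc X f \<epsilon> x"
      proof
        fix y assume yD: "y \<in> D"
        hence yT: "y \<in> T" unfolding D_def using connected_component_subset by blast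
        have "dist ((f ^^ k) x) ((f ^^ k) y) \<le> \<epsilon>" for k
        proof (cases "k \<le> n")
          case True thus ?thesis using yT unfolding T_def Ws_fin_def by blast
        next
          case False
          hence "k \<ge> N" using assms(10) by simp
          thus ?thesis using A[of k y] yD DC by fastforce
        qed
        moreover have "y \<in> X" using yT unfolding T_def Ws_loc_def by blast
        ultimately show "y \<in> Ws_loc X f \<epsilon> x" unfolding Ws_loc_def by blast
      qed
    qed
    thus ?thesis unfolding D_def CWs_loc_def .
  qed
  show ?thesis using P1 P2 P3a P3b unfolding C_def T_def by blast
qed


end
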